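(* Let $a>0$. The map $\Lambda_a$ maps $\mathcal D[0,\infty)$ into $\mathcal D[0,\infty)$, $\mathcal C[0,\infty)$ into $\mathcal C[0,\infty)$, $\mathcal{BV}[0,\infty)$ into $\mathcal{BV}[0,\infty)$, and absolutely continuous functions (on every compact interval) to absolutely continuous functions.
   Context: $\mathcal D[0,\infty)$ is the space of right-continuous functions $[0,\infty)\to\mathbb R$ with left limits; $\mathcal C[0,\infty)$ and $\mathcal{BV}[0,\infty)$ are its subsets of continuous functions and of functions of bounded variation on every compact interval. Notation: $x^+=\max(x,0)$, $x\wedge y=\min(x,y)$. For $a>0$ and a function $\phi:[0,\infty)\to\mathbb R$, $\Lambda_a(\phi)(t)=\phi(t)-\sup_{s\in[0,t]}\big[(\phi(s)-a)^+\wedge\inf_{u\in[s,t]}\phi(u)\big]$. *)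

theory Defs
  imports "HOL-Analysis.Analysis"
begin

text \<open>Functions on [0,\<infinity>) are modelled as real \<Rightarrow> real; only values on {0..} matter.\<close>

definition cadlag :: "(real \<Rightarrow> real) \<Rightarrow> bool" where
  "cadlag f \<longleftrightarrow> (\<forall>t\<ge>0. continuous (at_right t) f) \<and>
                 (\<forall>t>0. \<exists>l. (f \<longlongrightarrow> l) (at_left t))"

definition D_space :: "(real \<Rightarrow> real) set" where
  "D_space = {f. cadlag f}"

definition C_space :: "(real \<Rightarrow> real) set" where
  "C_space = {f. cadlag f \<and> continuous_on {0..} f}"

definition bounded_variation_on :: "real \<Rightarrow> real \<Rightarrow> (real \<Rightarrow> real) \<Rightarrow> bool" where
  "bounded_variation_on a b f \<longleftrightarrow>
     (\<exists>M. \<forall>(n::nat) (x::nat \<Rightarrow> real).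
        (a \<le> x 0 \<and> x n \<le> b \<and> (\<forall>i<n. x i \<le> x (Suc i))) \<longrightarrow>
        (\<Sum>i<n. \<bar>f (x (Suc i)) - f (x i)\<bar>) \<le> M)"

definition BV_space :: "(real \<Rightarrow> real) set" where
  "BV_space = {f. cadlag f \<and> (\<forall>T\<ge>0. bounded_variation_on 0 T f)}"

definition abs_continuous_on :: "real \<Rightarrow> real \<Rightarrow> (real \<Rightarrow> real) \<Rightarrow> bool" where
  "abs_continuous_on a b f \<longleftrightarrow>
     (\<forall>\<epsilon>>0. \<exists>\<delta>>0. \<forall>(n::nat) (u::nat \<Rightarrow> real) (v::nat \<Rightarrow> real).
        ((\<forall>i<n. a \<le> u i \<and> u i \<le> v i \<and> v i \<le> b) \<and>
         (\<forall>i j. i < j \<and> j < n \<longrightarrow> v i \<le> u j) \<and>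
         (\<Sum>i<n. v i - u i) < \<delta>) \<longrightarrow>
        (\<Sum>i<n. \<bar>f (v i) - f (u i)\<bar>) < \<epsilon>)"

definition AC_space :: "(real \<Rightarrow> real) set" where
  "AC_space = {f. \<forall>T\<ge>0. abs_continuous_on 0 T f}"

definition Lambda :: "real \<Rightarrow> (real \<Rightarrow> real) \<Rightarrow> real \<Rightarrow> real" where
  "Lambda a \<phi> t = \<phi> t -
     (SUP s\<in>{0..t}. min (max (\<phi> s - a) 0) (INF u\<in>{s..t}. \<phi> u))"

end

theory Submission
  imports Defs
begin

definition psi :: "real \<Rightarrow> (real \<Rightarrow> real) \<Rightarrow> real \<Rightarrow> real" where
  "psi a \<phi> t = (SUP s\<in>{0..t}. min (max (\<phi> s - a) 0) (INF u\<in>{s..t}. \<phi> u))"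

lemma Lambda_psi: "Lambda a \<phi> t = \<phi> t - psi a \<phi> t"
  by (simp add: Lambda_def psi_def)

lemma m_lower:
  fixes \<phi> :: "real \<Rightarrow> real"
  assumes L: "\<forall>u\<in>{0..t'}. L \<le> \<phi> u" and "0 \<le> s" "t \<le> t'" "u \<in> {s..t}"
  shows "(INF u\<in>{s..t}. \<phi> u) \<le> \<phi> u"
proof -
  have "bdd_below (\<phi> ` {s..t})" using L assms by (intro bdd_belowI2[where m=L]) auto
  then show ?thesis using assms(4) by (rule cINF_lower)
qed

lemma m_greatest:
  fixes \<phi> :: "real \<Rightarrow> real"
  assumes "s \<le> t" "\<And>u. u \<in> {s..t} \<Longrightarrow> c \<le> \<phi> u"
  shows "c \<le> (INF u\<in>{s..t}. \<phi> u)"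
  using assms by (intro cINF_greatest) auto

lemma psi_key:
  fixes \<phi> :: "real \<Rightarrow> real"
  assumes L: "\<forall>u\<in>{0..t'}. L \<le> \<phi> u" and t: "0 \<le> t" "t \<le> t'"
    and B: "\<forall>u\<in>{t..t'}. \<bar>\<phi> u - \<phi> t\<bar> \<le> B"
  shows "\<bar>psi a \<phi> t' - psi a \<phi> t\<bar> \<le> B"
proof -
  define m where "m s r = (INF u\<in>{s..r}. \<phi> u)" for s r
  define g where "g r s = min (max (\<phi> s - a) 0) (m s r)" for r s
  have psi: "psi a \<phi> r = (SUP s\<in>{0..r}. g r s)" for r
    by (simp add: psi_def g_def m_def)
  have B0: "0 \<le> B" using B t by force
  have mlow: "m s r \<le> \<phi> u" if "0 \<le> s" "r \<le> t'" "u \<in> {s..r}" for s r u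
    unfolding m_def by (rule m_lower[OF L]) (use that in auto)
  have gup: "g r s \<le> \<phi> r" if "0 \<le> s" "s \<le> r" "r \<le> t'" for s r
    using mlow[of s r r] that by (simp add: g_def)
  have bdd: "bdd_above (g r ` {0..r})" if "r \<le> t'" for r
    using gup that by (intro bdd_aboveI2[where M="\<phi> r"]) auto
  have gle: "g r s \<le> psi a \<phi> r" if "0 \<le> s" "s \<le> r" "r \<le> t'" for s r
    unfolding psi using that bdd[of r] by (intro cSUP_upper) auto
  have mtt: "m t t = \<phi> t" by (simp add: m_def)
  have lower: "psi a \<phi> t \<le> psi a \<phi> t' + B"
    unfolding psi[of t]
  proof (rule cSUP_least)
    show "{0..t} \<noteq> {}" using t by auto
    fix s assume s: "s \<in> {0..t}"
    have "m s t - B \<le> m s t'"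
      unfolding m_def[of s t']
    proof (rule m_greatest)
      show "s \<le> t'" using s t by auto
      fix u assume u: "u \<in> {s..t'}"
      show "m s t - B \<le> \<phi> u"
      proof (cases "u \<le> t")
        case True then show ?thesis using mlow[of s t u] s u t B0 by auto
      next
        case False then have "\<bar>\<phi> u - \<phi> t\<bar> \<le> B" using B u by auto
        then have "\<phi> t - B \<le> \<phi> u" by (simp add: abs_le_iff)
        moreover have "m s t \<le> \<phi> t" using mlow[of s t t] s t by auto
        ultimately show ?thesis by linarith
      qed
    qed
    then have "g t s \<le> g t' s + B" unfolding g_def using B0 by linarith
    moreover have "g t' s \<le> psi a \<phi> t'" using gle[of s t'] s t by auto
    ultimately show "g t s \<le> psi a \<phi> t' + B" by linarith
  qed
  have upper: "psi a \<phi> t' \<le> psi a \<phi> t + B"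
    unfolding psi[of t']
  proof (rule cSUP_least)
    show "{0..t'} \<noteq> {}" using t by auto
    fix s assume s: "s \<in> {0..t'}"
    show "g t' s \<le> psi a \<phi> t + B"
    proof (cases "s \<le> t")
      case True
      have "m s t' \<le> m s t"
        unfolding m_def[of s t]
        by (rule m_greatest) (use True s t mlow[of s t'] in auto)
      then have "g t' s \<le> g t s" by (simp add: g_def)
      also have "\<dots> \<le> psi a \<phi> t" using gle[of s t] s t True by auto
      finally show ?thesis using B0 by linarith
    next
      case False
      have "m s t' \<le> \<phi> s" using mlow[of s t' s] s by auto
      then have "g t' s \<le> min (max (\<phi> s - a) 0) (\<phi> s)" by (simp add: g_def)
      moreover have "\<bar>\<phi> s - \<phi> t\<bar> \<le> B" using B s False by auto
      moreover have "g t t = min (max (\<phi> t - a) 0) (\<phi> t)" by (simp add: g_def mtt)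
      moreover have "g t t \<le> psi a \<phi> t" using gle[of t t] t by auto
      ultimately show ?thesis by (simp add: abs_le_iff) linarith
    qed
  qed
  show ?thesis using lower upper by linarith
qed

lemma Lambda_key:
  fixes \<phi> :: "real \<Rightarrow> real"
  assumes L: "\<forall>u\<in>{0..t'}. L \<le> \<phi> u" and t: "0 \<le> t" "t \<le> t'"
    and B: "\<forall>u\<in>{t..t'}. \<bar>\<phi> u - \<phi> t\<bar> \<le> B"
  shows "\<bar>Lambda a \<phi> t' - Lambda a \<phi> t\<bar> \<le> 2 * B"
proof -
  have "\<bar>\<phi> t' - \<phi> t\<bar> \<le> B" using B t by auto
  moreover have "\<bar>psi a \<phi> t' - psi a \<phi> t\<bar> \<le> B" by (rule psi_key[OF L t B])
  ultimately show ?thesis unfolding Lambda_psi by linarith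
qed

lemma psi_witness:
  fixes \<phi> :: "real \<Rightarrow> real"
  assumes L: "\<forall>u\<in>{0..t'}. L \<le> \<phi> u" and t: "0 \<le> t" "t \<le> t'" and e: "e > 0"
  shows "\<exists>w\<in>{t..t'}. \<bar>psi a \<phi> t' - psi a \<phi> t\<bar> < \<bar>\<phi> w - \<phi> t\<bar> + e"
proof (rule ccontr)
  assume "\<not> ?thesis"
  then have "\<forall>u\<in>{t..t'}. \<bar>\<phi> u - \<phi> t\<bar> \<le> \<bar>psi a \<phi> t' - psi a \<phi> t\<bar> - e" by force
  from psi_key[OF L t this, of a] e show False by linarith
qed

definition locbdd :: "(real \<Rightarrow> real) \<Rightarrow> bool" where
  "locbdd \<phi> \<longleftrightarrow> (\<forall>T. \<exists>L. \<forall>u\<in>{0..T}. L \<le> \<phi> u)"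

lemma cadlag_locbdd:
  assumes "cadlag \<phi>"
  shows "locbdd \<phi>"
  unfolding locbdd_def
proof
  fix T :: real
  have loc: "\<exists>d>0. \<exists>L. \<forall>y. 0 \<le> y \<and> \<bar>y - x\<bar> < d \<longrightarrow> L \<le> \<phi> y" if x: "x \<in> {0..T}" for x
  proof -
    have "continuous (at_right x) \<phi>" using assms x unfolding cadlag_def by auto
    then have "(\<phi> \<longlongrightarrow> \<phi> x) (at_right x)" by (simp add: continuous_within)
    then have "eventually (\<lambda>y. dist (\<phi> y) (\<phi> x) < 1) (at_right x)"
      by (simp add: tendsto_iff)
    then obtain b where b: "b > x" "\<And>y. y > x \<Longrightarrow> y < b \<Longrightarrow> dist (\<phi> y) (\<phi> x) < 1"
      unfolding eventually_at_right_field by blast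
    show ?thesis
    proof (cases "x = 0")
      case True
      show ?thesis
      proof (intro exI conjI allI impI)
        show "b - x > 0" using b by auto
        fix y assume y: "0 \<le> y \<and> \<bar>y - x\<bar> < b - x"
        show "\<phi> x - 1 \<le> \<phi> y"
        proof (cases "y = x")
          case False
          then have "dist (\<phi> y) (\<phi> x) < 1" using b(2)[of y] y True by auto
          then show ?thesis by (simp add: dist_real_def abs_less_iff)
        qed simp
      qed
    next
      case False
      then have "x > 0" using x by auto
      then obtain l where "(\<phi> \<longlongrightarrow> l) (at_left x)" using assms unfolding cadlag_def by auto
      then have "eventually (\<lambda>y. dist (\<phi> y) l < 1) (at_left x)"
        by (simp add: tendsto_iff)
      then obtain b' where b': "b' < x" "\<And>y. y > b' \<Longrightarrow> y < x \<Longrightarrow> dist (\<phi> y) l < 1"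
        unfolding eventually_at_left_field by blast
      show ?thesis
      proof (intro exI conjI allI impI)
        show "min (b - x) (x - b') > 0" using b b' by auto
        fix y assume y: "0 \<le> y \<and> \<bar>y - x\<bar> < min (b - x) (x - b')"
        show "min (\<phi> x - 1) (l - 1) \<le> \<phi> y"
        proof (cases "y = x")
          case False
          show ?thesis
          proof (cases "y < x")
            case True
            then have "dist (\<phi> y) l < 1" using b'(2)[of y] y by auto
            then show ?thesis by (simp add: dist_real_def abs_less_iff min_le_iff_disj)
          next
            case f2: False
            then have "dist (\<phi> y) (\<phi> x) < 1" using b(2)[of y] y False by auto
            then show ?thesis by (simp add: dist_real_def abs_less_iff min_le_iff_disj)
          qed
        qed simp
      qed
    qed
  qed
  then obtain d L where dL: "\<And>x. x \<in> {0..T} \<Longrightarrow> d x > 0 \<and> (\<forall>y. 0 \<le> y \<and> \<bar>y - x\<bar> < d x \<longrightarrow> L x \<le> \<phi> y)"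
    by metis
  have "{0..T} \<subseteq> (\<Union>x\<in>{0..T}. ball x (d x))"
    using dL by force
  then obtain C where C: "C \<subseteq> {0..T}" "finite C" "{0..T} \<subseteq> (\<Union>x\<in>C. ball x (d x))"
    using compactE_image[OF compact_Icc[of 0 T], of "{0..T}" "\<lambda>x. ball x (d x)"] by blast
  show "\<exists>L. \<forall>u\<in>{0..T}. L \<le> \<phi> u"
  proof (intro exI ballI)
    fix u assume u: "u \<in> {0..T}"
    then obtain c where c: "c \<in> C" "u \<in> ball c (d c)" using C by auto
    then have "L c \<le> \<phi> u" using dL[of c] C u by (auto simp: dist_real_def)
    moreover have "Min (insert 0 (L ` C)) \<le> L c" using C c by auto
    ultimately show "Min (insert 0 (L ` C)) \<le> \<phi> u" by linarith
  qed
qed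

lemma right_cont_Lambda:
  assumes lb: "locbdd \<phi>" and t: "t \<ge> 0" and c: "continuous (at_right t) \<phi>"
  shows "continuous (at_right t) (Lambda a \<phi>)"
  unfolding continuous_within tendsto_iff eventually_at_right_field
proof (intro allI impI)
  fix e :: real assume e: "e > 0"
  from c have "(\<phi> \<longlongrightarrow> \<phi> t) (at_right t)" by (simp add: continuous_within)
  then have "eventually (\<lambda>y. dist (\<phi> y) (\<phi> t) < e/3) (at_right t)"
    using e tendsto_iff by (metis divide_pos_pos zero_less_numeral)
  then obtain b where b: "b > t" "\<And>y. y > t \<Longrightarrow> y < b \<Longrightarrow> dist (\<phi> y) (\<phi> t) < e/3"
    unfolding eventually_at_right_field by blast
  show "\<exists>b>t. \<forall>y>t. y < b \<longrightarrow> dist (Lambda a \<phi> y) (Lambda a \<phi> t) < e"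
  proof (intro exI conjI allI impI)
    show "b > t" by fact
    fix y assume y: "y > t" "y < b"
    obtain L where L: "\<forall>u\<in>{0..y}. L \<le> \<phi> u" using lb unfolding locbdd_def by blast
    have "\<forall>u\<in>{t..y}. \<bar>\<phi> u - \<phi> t\<bar> \<le> e/3"
    proof
      fix u assume u: "u \<in> {t..y}"
      show "\<bar>\<phi> u - \<phi> t\<bar> \<le> e/3"
      proof (cases "u = t")
        case False then show ?thesis using b(2)[of u] u y by (auto simp: dist_real_def)
      qed (use e in simp)
    qed
    from Lambda_key[OF L t _ this, of a] y e
    show "dist (Lambda a \<phi> y) (Lambda a \<phi> t) < e" by (simp add: dist_real_def)
  qed
qed

lemma left_lim_Lambda:
  assumes lb: "locbdd \<phi>" and t: "t > 0" and c: "(\<phi> \<longlongrightarrow> l) (at_left t)"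
  shows "\<exists>l'. (Lambda a \<phi> \<longlongrightarrow> l') (at_left t)"
proof -
  have "cauchy_filter (filtermap (Lambda a \<phi>) (at_left t))"
    unfolding cauchy_filter_metric_filtermap
  proof (intro allI impI)
    fix e :: real assume e: "e > 0"
    from c have "eventually (\<lambda>y. dist (\<phi> y) l < e/6) (at_left t)"
      using e tendsto_iff by (metis divide_pos_pos zero_less_numeral)
    then obtain b where b: "b < t" "\<And>y. y > b \<Longrightarrow> y < t \<Longrightarrow> dist (\<phi> y) l < e/6"
      unfolding eventually_at_left_field by blast
    define b' where "b' = max b 0"
    have b't: "b' < t" using b t by (simp add: b'_def)
    have main: "\<bar>Lambda a \<phi> y - Lambda a \<phi> x\<bar> < e"
      if xy: "b' < x" "x \<le> y" "y < t" for x y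
    proof -
      obtain L where L: "\<forall>u\<in>{0..y}. L \<le> \<phi> u" using lb unfolding locbdd_def by blast
      have "\<forall>u\<in>{x..y}. \<bar>\<phi> u - \<phi> x\<bar> \<le> e/3"
      proof
        fix u assume u: "u \<in> {x..y}"
        have "dist (\<phi> u) l < e/6" "dist (\<phi> x) l < e/6"
          using b(2)[of u] b(2)[of x] u xy by (auto simp: b'_def)
        then show "\<bar>\<phi> u - \<phi> x\<bar> \<le> e/3" unfolding dist_real_def abs_less_iff abs_le_iff by linarith
      qed
      moreover have "0 \<le> x" using xy by (simp add: b'_def)
      ultimately have "\<bar>Lambda a \<phi> y - Lambda a \<phi> x\<bar> \<le> 2 * (e/3)"
        using Lambda_key[OF L _ xy(2)] by blast
      then show ?thesis using e by linarith
    qed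
    show "\<exists>P. eventually P (at_left t) \<and> (\<forall>x y. P x \<and> P y \<longrightarrow> dist (Lambda a \<phi> x) (Lambda a \<phi> y) < e)"
    proof (intro exI[of _ "\<lambda>y. b' < y \<and> y < t"] conjI allI impI)
      show "eventually (\<lambda>y. b' < y \<and> y < t) (at_left t)"
        unfolding eventually_at_left_field using b't by blast
      fix x y assume "(b' < x \<and> x < t) \<and> (b' < y \<and> y < t)"
      then show "dist (Lambda a \<phi> x) (Lambda a \<phi> y) < e"
        using main[of x y] main[of y x] by (cases "x \<le> y") (auto simp: dist_real_def abs_minus_commute)
    qed
  qed
  moreover have "filtermap (Lambda a \<phi>) (at_left t) \<noteq> bot"
    by (simp add: filtermap_bot_iff)
  ultimately obtain c where "filtermap (Lambda a \<phi>) (at_left t) \<le> nhds c"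
    using cauchy_filter_complete_converges[of _ UNIV] complete_UNIV by (metis top_greatest principal_UNIV)
  then show ?thesis unfolding filterlim_def by blast
qed

lemma cadlag_Lambda:
  assumes "cadlag \<phi>"
  shows "cadlag (Lambda a \<phi>)"
  using assms cadlag_locbdd[OF assms] right_cont_Lambda left_lim_Lambda
  unfolding cadlag_def by metis

lemma cont_Lambda:
  assumes lb: "locbdd \<phi>" and c: "continuous_on {0..} \<phi>"
  shows "continuous_on {0..} (Lambda a \<phi>)"
  unfolding continuous_on_iff
proof (intro ballI allI impI)
  fix t e :: real assume t: "t \<in> {0..}" and e: "e > 0"
  obtain d where d: "d > 0" "\<And>y. y \<in> {0..} \<Longrightarrow> dist y t < d \<Longrightarrow> dist (\<phi> y) (\<phi> t) < e/8"
    using c t e unfolding continuous_on_iff by (metis divide_pos_pos zero_less_numeral)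
  show "\<exists>d>0. \<forall>y\<in>{0..}. dist y t < d \<longrightarrow> dist (Lambda a \<phi> y) (Lambda a \<phi> t) < e"
  proof (intro exI conjI ballI impI)
    show "d > 0" by fact
    fix y assume y: "y \<in> {0..}" "dist y t < d"
    have near: "\<bar>\<phi> u - \<phi> t\<bar> < e/8" if "min y t \<le> u" "u \<le> max y t" for u
      using d(2)[of u] that y t by (auto simp: dist_real_def)
    obtain L where L: "\<forall>u\<in>{0..max y t}. L \<le> \<phi> u" using lb unfolding locbdd_def by blast
    show "dist (Lambda a \<phi> y) (Lambda a \<phi> t) < e"
    proof (cases "t \<le> y")
      case True
      have "\<forall>u\<in>{t..y}. \<bar>\<phi> u - \<phi> t\<bar> \<le> e/4"
      proof
        fix u assume "u \<in> {t..y}"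
        then have "\<bar>\<phi> u - \<phi> t\<bar> < e/8" using near[of u] True by auto
        then show "\<bar>\<phi> u - \<phi> t\<bar> \<le> e/4" using e by linarith
      qed
      from Lambda_key[OF _ _ True this, of L a] L t True e show ?thesis
        by (simp add: dist_real_def max_def)
    next
      case False
      have "\<forall>u\<in>{y..t}. \<bar>\<phi> u - \<phi> y\<bar> \<le> e/4"
      proof
        fix u assume "u \<in> {y..t}"
        then have "\<bar>\<phi> u - \<phi> t\<bar> < e/8" "\<bar>\<phi> y - \<phi> t\<bar> < e/8" using near[of u] near[of y] False by auto
        then show "\<bar>\<phi> u - \<phi> y\<bar> \<le> e/4" unfolding abs_less_iff abs_le_iff by linarith
      qed
      from Lambda_key[OF _ _ _ this, of L a] L y False e show ?thesis
        by (simp add: dist_real_def max_def abs_minus_commute)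
    qed
  qed
qed

lemma mono_part:
  fixes x :: "nat \<Rightarrow> real"
  assumes "\<forall>i<n. x i \<le> x (Suc i)" "i \<le> j" "j \<le> n"
  shows "x i \<le> x j"
  using assms(2,3)
proof (induction j)
  case 0 then show ?case by simp
next
  case (Suc j)
  show ?case
  proof (cases "i = Suc j")
    case False
    then have "x i \<le> x j" using Suc by auto
    also have "x j \<le> x (Suc j)" using assms(1) Suc by auto
    finally show ?thesis .
  qed simp
qed

lemma sum_pairs:
  fixes f :: "nat \<Rightarrow> real"
  shows "(\<Sum>j<2*n. f j) = (\<Sum>i<n. f (2*i) + f (Suc (2*i)))"
  by (induction n) (simp_all add: algebra_simps)

lemma bv_Lambda:
  fixes \<phi> :: "real \<Rightarrow> real"
  assumes lb: "locbdd \<phi>" and bv: "bounded_variation_on 0 T \<phi>"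
  shows "bounded_variation_on 0 T (Lambda a \<phi>)"
proof -
  obtain M where M: "\<And>n (x::nat\<Rightarrow>real). 0 \<le> x 0 \<and> x n \<le> T \<and> (\<forall>i<n. x i \<le> x (Suc i)) \<Longrightarrow>
      (\<Sum>i<n. \<bar>\<phi> (x (Suc i)) - \<phi> (x i)\<bar>) \<le> M"
    using bv unfolding bounded_variation_on_def by blast
  show ?thesis unfolding bounded_variation_on_def
  proof (intro exI allI impI)
    fix n and x :: "nat \<Rightarrow> real"
    assume x: "0 \<le> x 0 \<and> x n \<le> T \<and> (\<forall>i<n. x i \<le> x (Suc i))"
    define \<epsilon> where "\<epsilon> = 1 / (real n + 1)"
    have \<epsilon>: "\<epsilon> > 0" "real n * \<epsilon> \<le> 1" by (auto simp: \<epsilon>_def field_simps)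
    have "\<forall>i. \<exists>w. i < n \<longrightarrow> w \<in> {x i..x (Suc i)} \<and>
       \<bar>psi a \<phi> (x (Suc i)) - psi a \<phi> (x i)\<bar> < \<bar>\<phi> w - \<phi> (x i)\<bar> + \<epsilon>"
    proof
      fix i show "\<exists>w. i < n \<longrightarrow> w \<in> {x i..x (Suc i)} \<and>
       \<bar>psi a \<phi> (x (Suc i)) - psi a \<phi> (x i)\<bar> < \<bar>\<phi> w - \<phi> (x i)\<bar> + \<epsilon>"
      proof (cases "i < n")
        case True
        obtain L where L: "\<forall>u\<in>{0..x (Suc i)}. L \<le> \<phi> u" using lb unfolding locbdd_def by blast
        have "x 0 \<le> x i" using mono_part[of n x 0 i] x True by auto
        then have "0 \<le> x i" using x by linarith
        moreover have "x i \<le> x (Suc i)" using x True by auto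
        ultimately show ?thesis using psi_witness[OF L _ _ \<epsilon>(1), of "x i" a] by blast
      qed simp
    qed
    then obtain w where w: "\<And>i. i < n \<Longrightarrow> w i \<in> {x i..x (Suc i)} \<and>
       \<bar>psi a \<phi> (x (Suc i)) - psi a \<phi> (x i)\<bar> < \<bar>\<phi> (w i) - \<phi> (x i)\<bar> + \<epsilon>"
      by metis
    define y where "y j = (if even j then x (j div 2) else w (j div 2))" for j
    have y0: "y 0 = x 0" by (simp add: y_def)
    have y2: "y (2*i) = x i" for i by (simp add: y_def)
    have y21: "y (Suc (2*i)) = w i" for i by (simp add: y_def)
    have y22: "y (Suc (Suc (2*i))) = x (Suc i)" for i
      using y2[of "Suc i"] by simp
    have ymono: "\<forall>j<2*n. y j \<le> y (Suc j)"
    proof (intro allI impI)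
      fix j assume j: "j < 2*n"
      show "y j \<le> y (Suc j)"
      proof (cases "even j")
        case True
        then obtain i where i: "j = 2*i" by blast
        then show ?thesis using w[of i] j by (auto simp: y2 y21)
      next
        case False
        then obtain i where i: "j = Suc (2*i)" by (metis oddE add.commute plus_1_eq_Suc)
        then show ?thesis using w[of i] j by (auto simp: y21 y22)
      qed
    qed
    have "(\<Sum>j<2*n. \<bar>\<phi> (y (Suc j)) - \<phi> (y j)\<bar>) \<le> M"
      by (rule M) (use x ymono y0 y2[of n] in auto)
    then have "(\<Sum>i<n. \<bar>\<phi> (w i) - \<phi> (x i)\<bar> + \<bar>\<phi> (x (Suc i)) - \<phi> (w i)\<bar>) \<le> M"
      by (simp only: sum_pairs y2 y21 y22)
    moreover have "(\<Sum>i<n. \<bar>\<phi> (w i) - \<phi> (x i)\<bar>) \<le> (\<Sum>i<n. \<bar>\<phi> (w i) - \<phi> (x i)\<bar> + \<bar>\<phi> (x (Suc i)) - \<phi> (w i)\<bar>)"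
      by (rule sum_mono) simp
    ultimately have S1: "(\<Sum>i<n. \<bar>\<phi> (w i) - \<phi> (x i)\<bar>) \<le> M" by linarith
    have S2: "(\<Sum>i<n. \<bar>\<phi> (x (Suc i)) - \<phi> (x i)\<bar>) \<le> M" by (rule M) (use x in auto)
    have "(\<Sum>i<n. \<bar>Lambda a \<phi> (x (Suc i)) - Lambda a \<phi> (x i)\<bar>) \<le>
          (\<Sum>i<n. \<bar>\<phi> (x (Suc i)) - \<phi> (x i)\<bar> + (\<bar>\<phi> (w i) - \<phi> (x i)\<bar> + \<epsilon>))"
    proof (rule sum_mono)
      fix i assume "i \<in> {..<n}"
      then have "\<bar>psi a \<phi> (x (Suc i)) - psi a \<phi> (x i)\<bar> < \<bar>\<phi> (w i) - \<phi> (x i)\<bar> + \<epsilon>" using w by auto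
      then show "\<bar>Lambda a \<phi> (x (Suc i)) - Lambda a \<phi> (x i)\<bar> \<le> \<bar>\<phi> (x (Suc i)) - \<phi> (x i)\<bar> + (\<bar>\<phi> (w i) - \<phi> (x i)\<bar> + \<epsilon>)"
        unfolding Lambda_psi by linarith
    qed
    also have "\<dots> = (\<Sum>i<n. \<bar>\<phi> (x (Suc i)) - \<phi> (x i)\<bar>) + (\<Sum>i<n. \<bar>\<phi> (w i) - \<phi> (x i)\<bar>) + real n * \<epsilon>"
      by (simp add: sum.distrib)
    also have "\<dots> \<le> 2 * M + 1" using S1 S2 \<epsilon> by linarith
    finally show "(\<Sum>i<n. \<bar>Lambda a \<phi> (x (Suc i)) - Lambda a \<phi> (x i)\<bar>) \<le> 2 * M + 1" .
  qed
qed

lemma ac_cont: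
  fixes f :: "real \<Rightarrow> real"
  assumes ac: "abs_continuous_on 0 T f"
  shows "continuous_on {0..T} f"
  unfolding continuous_on_iff
proof (intro ballI allI impI)
  fix x e :: real assume x: "x \<in> {0..T}" and e: "e > 0"
  from mp[OF ac[unfolded abs_continuous_on_def, THEN spec, of "e"] e]
  obtain d where dP: "d > 0 \<and> (\<forall>(n::nat) u v. (\<forall>i<n. 0 \<le> u i \<and> u i \<le> v i \<and> v i \<le> T) \<and>
         (\<forall>i j. i < j \<and> j < n \<longrightarrow> v i \<le> u j) \<and> (\<Sum>i<n. v i - u i) < d \<longrightarrow>
        (\<Sum>i<n. \<bar>f (v i) - f (u i)\<bar>) < e)"
    ..
  note d = conjunct1[OF dP] and P0 = conjunct2[OF dP]
  note P = P0[rule_format]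
  show "\<exists>d>0. \<forall>y\<in>{0..T}. dist y x < d \<longrightarrow> dist (f y) (f x) < e"
  proof (intro exI conjI ballI impI)
    show "d > 0" by fact
    fix y assume y: "y \<in> {0..T}" "dist y x < d"
    have len: "max x y - min x y = \<bar>y - x\<bar>" by (simp add: max_def min_def abs_if)
    have dd: "\<bar>y - x\<bar> < d" using y(2) by (simp add: dist_real_def)
    have b: "0 \<le> min x y" "min x y \<le> max x y" "max x y \<le> T" using x y(1) by auto
    have "(\<Sum>i<1::nat. \<bar>f ((\<lambda>_. max x y) i) - f ((\<lambda>_. min x y) i)\<bar>) < e"
    proof (rule P[of 1 "\<lambda>_. min x y" "\<lambda>_. max x y"], intro conjI allI impI)
      show "0 \<le> min x y" "min x y \<le> max x y" "max x y \<le> T" for i by (fact b)+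
      show "max x y \<le> min x y" if "i < j \<and> j < (1::nat)" for i j using that by simp
      show "(\<Sum>i<1::nat. max x y - min x y) < d" using len dd by simp
    qed
    then have "\<bar>f (max x y) - f (min x y)\<bar> < e" by simp
    moreover have "\<bar>f (max x y) - f (min x y)\<bar> = \<bar>f y - f x\<bar>"
      by (cases "x \<le> y") (simp_all add: max_def min_def abs_minus_commute)
    ultimately show "dist (f y) (f x) < e" by (simp add: dist_real_def)
  qed
qed

lemma ac_locbdd:
  fixes \<phi> :: "real \<Rightarrow> real"
  assumes "\<forall>T\<ge>0. abs_continuous_on 0 T \<phi>"
  shows "locbdd \<phi>"
  unfolding locbdd_def
proof
  fix T :: real
  show "\<exists>L. \<forall>u\<in>{0..T}. L \<le> \<phi> u"
  proof (cases "T \<ge> 0")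
    case True
    then have "continuous_on {0..T} \<phi>" using assms ac_cont by blast
    then obtain x where "x \<in> {0..T}" "\<forall>y\<in>{0..T}. \<phi> x \<le> \<phi> y"
      using continuous_attains_inf[OF compact_Icc, of 0 T \<phi>] True by auto
    then show ?thesis by blast
  qed auto
qed

lemma ac_Lambda:
  fixes \<phi> :: "real \<Rightarrow> real"
  assumes lb: "locbdd \<phi>" and ac: "abs_continuous_on 0 T \<phi>"
  shows "abs_continuous_on 0 T (Lambda a \<phi>)"
  unfolding abs_continuous_on_def
proof (intro allI impI)
  fix e :: real assume e: "e > 0"
  have e3: "e/3 > 0" using e by simp
  from mp[OF ac[unfolded abs_continuous_on_def, THEN spec, of "e/3"] e3]
  obtain d where dP: "d > 0 \<and> (\<forall>(n::nat) u v. (\<forall>i<n. 0 \<le> u i \<and> u i \<le> v i \<and> v i \<le> T) \<and>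
         (\<forall>i j. i < j \<and> j < n \<longrightarrow> v i \<le> u j) \<and> (\<Sum>i<n. v i - u i) < d \<longrightarrow>
        (\<Sum>i<n. \<bar>\<phi> (v i) - \<phi> (u i)\<bar>) < e/3)"
    ..
  note d = conjunct1[OF dP] and P0 = conjunct2[OF dP]
  note P = P0[rule_format]
  show "\<exists>d>0. \<forall>(n::nat) u v. (\<forall>i<n. 0 \<le> u i \<and> u i \<le> v i \<and> v i \<le> T) \<and>
         (\<forall>i j. i < j \<and> j < n \<longrightarrow> v i \<le> u j) \<and> (\<Sum>i<n. v i - u i) < d \<longrightarrow>
        (\<Sum>i<n. \<bar>Lambda a \<phi> (v i) - Lambda a \<phi> (u i)\<bar>) < e"
  proof (intro exI conjI allI impI)
    show "d > 0" by fact
    fix n :: nat and u v :: "nat \<Rightarrow> real"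
    assume H: "(\<forall>i<n. 0 \<le> u i \<and> u i \<le> v i \<and> v i \<le> T) \<and>
         (\<forall>i j. i < j \<and> j < n \<longrightarrow> v i \<le> u j) \<and> (\<Sum>i<n. v i - u i) < d"
    define \<epsilon> where "\<epsilon> = e / (3 * (real n + 1))"
    have \<epsilon>: "\<epsilon> > 0" "real n * \<epsilon> < e/3" using e by (auto simp: \<epsilon>_def field_simps)
    have "\<forall>i. \<exists>w. i < n \<longrightarrow> w \<in> {u i..v i} \<and>
       \<bar>psi a \<phi> (v i) - psi a \<phi> (u i)\<bar> < \<bar>\<phi> w - \<phi> (u i)\<bar> + \<epsilon>"
    proof
      fix i show "\<exists>w. i < n \<longrightarrow> w \<in> {u i..v i} \<and>
       \<bar>psi a \<phi> (v i) - psi a \<phi> (u i)\<bar> < \<bar>\<phi> w - \<phi> (u i)\<bar> + \<epsilon>"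
      proof (cases "i < n")
        case True
        obtain L where L: "\<forall>y\<in>{0..v i}. L \<le> \<phi> y" using lb unfolding locbdd_def by blast
        show ?thesis using psi_witness[OF L _ _ \<epsilon>(1), of "u i" a] H True by blast
      qed simp
    qed
    then obtain w where w: "\<And>i. i < n \<Longrightarrow> w i \<in> {u i..v i} \<and>
       \<bar>psi a \<phi> (v i) - psi a \<phi> (u i)\<bar> < \<bar>\<phi> (w i) - \<phi> (u i)\<bar> + \<epsilon>"
      by metis
    have "(\<Sum>i<n. w i - u i) \<le> (\<Sum>i<n. v i - u i)"
      by (rule sum_mono) (use w in auto)
    then have S1: "(\<Sum>i<n. \<bar>\<phi> (w i) - \<phi> (u i)\<bar>) < e/3"
    proof (intro P conjI allI impI)
      fix i assume i: "i < n"
      show "0 \<le> u i" "u i \<le> w i" "w i \<le> T" using H w[OF i] i by auto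
    next
      fix i j assume ij: "i < j \<and> j < n"
      then have "w i \<le> v i" using w[of i] by auto
      also have "v i \<le> u j" using H ij by blast
      finally show "w i \<le> u j" .
    qed (use H in linarith)
    have S2: "(\<Sum>i<n. \<bar>\<phi> (v i) - \<phi> (u i)\<bar>) < e/3" by (rule P) (use H in auto)
    have "(\<Sum>i<n. \<bar>Lambda a \<phi> (v i) - Lambda a \<phi> (u i)\<bar>) \<le>
          (\<Sum>i<n. \<bar>\<phi> (v i) - \<phi> (u i)\<bar> + (\<bar>\<phi> (w i) - \<phi> (u i)\<bar> + \<epsilon>))"
    proof (rule sum_mono)
      fix i assume "i \<in> {..<n}"
      then have "\<bar>psi a \<phi> (v i) - psi a \<phi> (u i)\<bar> < \<bar>\<phi> (w i) - \<phi> (u i)\<bar> + \<epsilon>" using w by auto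
      then show "\<bar>Lambda a \<phi> (v i) - Lambda a \<phi> (u i)\<bar> \<le> \<bar>\<phi> (v i) - \<phi> (u i)\<bar> + (\<bar>\<phi> (w i) - \<phi> (u i)\<bar> + \<epsilon>)"
        unfolding Lambda_psi by linarith
    qed
    also have "\<dots> = (\<Sum>i<n. \<bar>\<phi> (v i) - \<phi> (u i)\<bar>) + (\<Sum>i<n. \<bar>\<phi> (w i) - \<phi> (u i)\<bar>) + real n * \<epsilon>"
      by (simp add: sum.distrib)
    also have "\<dots> < e" using S1 S2 \<epsilon> by linarith
    finally show "(\<Sum>i<n. \<bar>Lambda a \<phi> (v i) - Lambda a \<phi> (u i)\<bar>) < e" .
  qed
qed

theorem proposition1p3:
  fixes a :: real
  assumes "a > 0"
  shows "(\<forall>\<phi>\<in>D_space. Lambda a \<phi> \<in> D_space) \<and>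
         (\<forall>\<phi>\<in>C_space. Lambda a \<phi> \<in> C_space) \<and>
         (\<forall>\<phi>\<in>BV_space. Lambda a \<phi> \<in> BV_space) \<and>
         (\<forall>\<phi>\<in>AC_space. Lambda a \<phi> \<in> AC_space)"
proof (intro conjI ballI)
  fix \<phi> assume "\<phi> \<in> D_space"
  then have "cadlag \<phi>" unfolding D_space_def by blast
  then have "cadlag (Lambda a \<phi>)" by (rule cadlag_Lambda)
  then show "Lambda a \<phi> \<in> D_space" unfolding D_space_def by blast
next
  fix \<phi> assume "\<phi> \<in> C_space"
  then have c: "cadlag \<phi>" "continuous_on {0..} \<phi>" unfolding C_space_def by blast+
  have "cadlag (Lambda a \<phi>)" by (rule cadlag_Lambda[OF c(1)])
  moreover have "continuous_on {0..} (Lambda a \<phi>)"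
    by (rule cont_Lambda[OF cadlag_locbdd[OF c(1)] c(2)])
  ultimately show "Lambda a \<phi> \<in> C_space" unfolding C_space_def by blast
next
  fix \<phi> assume "\<phi> \<in> BV_space"
  then have c: "cadlag \<phi>" "\<forall>T\<ge>0. bounded_variation_on 0 T \<phi>" unfolding BV_space_def by blast+
  have "cadlag (Lambda a \<phi>)" by (rule cadlag_Lambda[OF c(1)])
  moreover have "\<forall>T\<ge>0. bounded_variation_on 0 T (Lambda a \<phi>)"
  proof (intro allI impI)
    fix T :: real assume "T \<ge> 0"
    then have "bounded_variation_on 0 T \<phi>" using c(2) by blast
    then show "bounded_variation_on 0 T (Lambda a \<phi>)"
      by (rule bv_Lambda[OF cadlag_locbdd[OF c(1)]])
  qed
  ultimately show "Lambda a \<phi> \<in> BV_space" unfolding BV_space_def by blast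
next
  fix \<phi> assume "\<phi> \<in> AC_space"
  then have c: "\<forall>T\<ge>0. abs_continuous_on 0 T \<phi>" unfolding AC_space_def by blast
  have "\<forall>T\<ge>0. abs_continuous_on 0 T (Lambda a \<phi>)"
  proof (intro allI impI)
    fix T :: real assume "T \<ge> 0"
    then have "abs_continuous_on 0 T \<phi>" using c by blast
    then show "abs_continuous_on 0 T (Lambda a \<phi>)"
      by (rule ac_Lambda[OF ac_locbdd[OF c]])
  qed
  then show "Lambda a \<phi> \<in> AC_space" unfolding AC_space_def by blast
qed

end
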